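(* Consider the MDP model with $\mathbf{Y}=\{b_n:n\ge1\}\cup\{1\}$, where $b_n=\sum_{i=1}^n 2^{-i}$, endowed with the relative Euclidean topology, state space $\mathbf{X}=\mathbf{Y}\cup\{\Delta\}$ with $\Delta$ an isolated point, action space $\mathbf{A}=\{1,2,3\}$ with the discrete topology, and transition kernel: $p(\{\Delta\}|\Delta,a)=p(\{\Delta\}|1,a)=1$ for all $a$; $p(\{\Delta\}|b_1,1)=1$; $p(\{b_n\}|b_n,1)=1-2^{-(n-2)}$ and $p(\{\Delta\}|b_n,1)=2^{-(n-2)}$ for $n\ge2$; and for all $n\ge1$: $p(\{\Delta\}|b_n,2)=p(\{b_{n+1}\}|b_n,2)=\tfrac12$; $p(\{\Delta\}|b_n,3)=p(\{1\}|b_n,3)=\tfrac14$, $p(\{b_{n+1}\}|b_n,3)=\tfrac12$. Let the initial state be $x_0=b_1=\tfrac12$. For $n\ge3$ let $\psi^n$ be the deterministic stationary strategy with $\psi^n(x)=2$ for $x\in\{b_1,\dots,b_n\}$, $\psi^n(x)=1$ for $x\in\{b_m:m\ge n+1\}$, and $\psi^n(x)=3$ for $x\in\{1,\Delta\}$; let $\psi$ be the deterministic stationary strategy with $\psi\equiv3$; and let $\Lambda=\{\psi^n:n\ge3\}\cup\{\psi\}$. Then: (a) Condition (S) is satisfied; (b) the model is absorbing but not $\Lambda$-uniformly absorbing with the initial state $x_0$; (c) $\eta^{\psi^n}_{x_0}|_{\mathbf{Y}}$ converges to $\eta^{\psi}_{x_0}|_{\mathbf{Y}}$ as $n\to\infty$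 in the w-topology, but not in the s-topology; (d) $\mathcal{D}^\Lambda_{x_0}|_{\mathbf{Y}}$ is w-compact but not s-compact in $\mathcal{M}(\mathbf{Y})$.
   Context: For an MDP model with Borel state space $\mathbf{X}$, Borel action space $\mathbf{A}$ and transition kernel $p$: with $\mathbf{H}_0=\mathbf{X}$, $\mathbf{H}_n=(\mathbf{X}\times\mathbf{A})^n\times\mathbf{X}$, $\mathbf{H}=\mathbf{X}\times(\mathbf{A}\times\mathbf{X})^\infty$, $X_n(h)=x_n$, $A_{n+1}(h)=a_{n+1}$, a strategy is a sequence $\pi=\{\pi_n\}_{n\ge1}$ of stochastic kernels $\pi_n(da|h_{n-1})$ on $\mathcal{B}(\mathbf{A})$ given $\mathbf{H}_{n-1}$, $\Pi$ the set of all strategies. A deterministic stationary strategy given by a measurable map $\psi:\mathbf{X}\to\mathbf{A}$ is the strategy with $\pi_n(da|h_{n-1})=\delta_{\psi(x_{n-1})}(da)$ for all $n$. $\mathbb{P}^\pi_{x_0}$ is the unique probability on $\mathbf{H}$ with $X_0=x_0$, conditional law of $A_{n+1}$ given $X_0,A_1,\dots,X_n$ equal to $\pi_{n+1}(\cdot|X_0,A_1,\dots,X_n)$, conditional law of $X_{n+1}$ given $X_0,\dots,X_n,A_{n+1}$ equal to $p(\cdot|X_n,A_{n+1})$; $\mathbb{E}^\pi_{x_0}$ its expectation. With $\tau=\inf\{n\ge0:X_n=\Delta\}$, the model is absorbing with initial state $x_0$ if $\mathbb{E}^\pi_{x_0}[\tau]<\infty$ for all $\pi\in\Pi$, and for nonempty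 $\Lambda\subseteq\Pi$ an absorbing model is $\Lambda$-uniformly absorbing if $\lim_{n\to\infty}\sup_{\pi\in\Lambda}\mathbb{E}^\pi_{x_0}[\sum_{t=n}^\infty\mathbb{I}\{\tau>t\}]=0$. The occupation measure is $\eta^\pi_{x_0}(dx\times da)=\mathbb{E}^\pi_{x_0}[\sum_{n\ge0}\mathbb{I}\{X_n\in dx,A_{n+1}\in da\}]$ on $\mathbf{Y}\times\mathbf{A}$, its marginal is $\eta^\pi_{x_0}|_{\mathbf{Y}}(dx)=\eta^\pi_{x_0}(dx\times\mathbf{A})$, and $\mathcal{D}^\Lambda_{x_0}|_{\mathbf{Y}}=\{\eta^\pi_{x_0}|_{\mathbf{Y}}:\pi\in\Lambda\}$. Condition (S): $\mathbf{A}$ is compact and for each bounded measurable $g$ on $\mathbf{X}$ and each $x\in\mathbf{X}$, $a\mapsto\int_{\mathbf{X}}g(y)p(dy|x,a)$ is continuous. On the space $\mathcal{M}(\mathbf{Y})$ of finite Borel measures on $\mathbf{Y}$: the w-topology is the coarsest topology making $\eta\mapsto\int f\,d\eta$ continuous for all bounded continuous $f$; the s-topology is the coarsest topology making $\eta\mapsto\int f\,d\eta$ continuous for all bounded measurable $f$. *)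

theory Defs
  imports "HOL-Probability.Probability"
begin

text \<open>A history h_n = (x_0,a_1,x_1,...,a_n,x_n) is represented as the list
  [(x_0,a_1),...,(x_{n-1},a_n)] together with the last state x_n.\<close>
type_synonym ('x,'a) hist = "('x \<times> 'a) list \<times> 'x"

text \<open>A strategy: pi (Suc n) h_n is the law pi_{n+1}(da|h_n) of A_{n+1}
  (the component pi 0 is never used).\<close>
type_synonym ('x,'a) strategy = "nat \<Rightarrow> ('x,'a) hist \<Rightarrow> 'a pmf"

definition strategies :: "'a set \<Rightarrow> ('x,'a) strategy set" where
  "strategies A = {\<pi>. \<forall>n h. set_pmf (\<pi> n h) \<subseteq> A}"

definition det_stationary :: "('x \<Rightarrow> 'a) \<Rightarrow> ('x,'a) strategy" where
  "det_stationary \<psi> = (\<lambda>n h. return_pmf (\<psi> (snd h)))"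

text \<open>Law of the history H_n = (X_0,A_1,...,X_n) under P^pi_{x0}
  (finite-dimensional marginals of the strategic measure).\<close>
primrec hist_dist :: "('x \<Rightarrow> 'a \<Rightarrow> 'x pmf) \<Rightarrow> ('x,'a) strategy \<Rightarrow> 'x \<Rightarrow> nat \<Rightarrow> ('x,'a) hist pmf" where
  "hist_dist p \<pi> x0 0 = return_pmf ([], x0)"
| "hist_dist p \<pi> x0 (Suc n) =
     bind_pmf (hist_dist p \<pi> x0 n) (\<lambda>h.
       bind_pmf (\<pi> (Suc n) h) (\<lambda>a.
         map_pmf (\<lambda>y. (fst h @ [(snd h, a)], y)) (p (snd h) a)))"

definition sa_dist :: "('x \<Rightarrow> 'a \<Rightarrow> 'x pmf) \<Rightarrow> ('x,'a) strategy \<Rightarrow> 'x \<Rightarrow> nat \<Rightarrow> ('x \<times> 'a) pmf" where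
  "sa_dist p \<pi> x0 n =
     bind_pmf (hist_dist p \<pi> x0 n) (\<lambda>h. map_pmf (\<lambda>a. (snd h, a)) (\<pi> (Suc n) h))"

definition states_of :: "('x,'a) hist \<Rightarrow> 'x set" where
  "states_of h = insert (snd h) (fst ` set (fst h))"

text \<open>P^pi_{x0}(tau > t) = P(X_0,...,X_t all different from Delta).\<close>
definition tau_gt_prob :: "'x \<Rightarrow> ('x \<Rightarrow> 'a \<Rightarrow> 'x pmf) \<Rightarrow> ('x,'a) strategy \<Rightarrow> 'x \<Rightarrow> nat \<Rightarrow> real" where
  "tau_gt_prob \<Delta> p \<pi> x0 t = measure_pmf.prob (hist_dist p \<pi> x0 t) {h. \<Delta> \<notin> states_of h}"

text \<open>E^pi_{x0}[sum_{t>=n} I{tau>t}] (by Tonelli); for n = 0 this is E^pi_{x0}[tau].\<close>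
definition tail_tau :: "'x \<Rightarrow> ('x \<Rightarrow> 'a \<Rightarrow> 'x pmf) \<Rightarrow> ('x,'a) strategy \<Rightarrow> 'x \<Rightarrow> nat \<Rightarrow> ennreal" where
  "tail_tau \<Delta> p \<pi> x0 n = (\<Sum>t. ennreal (tau_gt_prob \<Delta> p \<pi> x0 (t + n)))"

definition exp_tau :: "'x \<Rightarrow> ('x \<Rightarrow> 'a \<Rightarrow> 'x pmf) \<Rightarrow> ('x,'a) strategy \<Rightarrow> 'x \<Rightarrow> ennreal" where
  "exp_tau \<Delta> p \<pi> x0 = tail_tau \<Delta> p \<pi> x0 0"

definition absorbing :: "'x \<Rightarrow> ('x \<Rightarrow> 'a \<Rightarrow> 'x pmf) \<Rightarrow> 'a set \<Rightarrow> 'x \<Rightarrow> bool" where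
  "absorbing \<Delta> p A x0 \<longleftrightarrow> (\<forall>\<pi>\<in>strategies A. exp_tau \<Delta> p \<pi> x0 < \<infinity>)"

definition uniformly_absorbing ::
  "'x \<Rightarrow> ('x \<Rightarrow> 'a \<Rightarrow> 'x pmf) \<Rightarrow> 'a set \<Rightarrow> ('x,'a) strategy set \<Rightarrow> 'x \<Rightarrow> bool" where
  "uniformly_absorbing \<Delta> p A \<Lambda> x0 \<longleftrightarrow>
     absorbing \<Delta> p A x0 \<and> ((\<lambda>n. \<Squnion>\<pi>\<in>\<Lambda>. tail_tau \<Delta> p \<pi> x0 n) \<longlonglongrightarrow> 0)"

definition condition_S ::
  "('x::topological_space) set \<Rightarrow> ('a::topological_space) set \<Rightarrow> ('x \<Rightarrow> 'a \<Rightarrow> 'x pmf) \<Rightarrow> bool" where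
  "condition_S X A p \<longleftrightarrow> compact A \<and>
     (\<forall>g::'x \<Rightarrow> real. g \<in> borel_measurable (restrict_space borel X) \<and> bounded (g ` X) \<longrightarrow>
        (\<forall>x\<in>X. continuous_on A (\<lambda>a. \<integral>y. g y \<partial>measure_pmf (p x a))))"

definition occ_measure ::
  "('x::topological_space) set \<Rightarrow> ('a::topological_space) set \<Rightarrow> ('x \<Rightarrow> 'a \<Rightarrow> 'x pmf)
     \<Rightarrow> ('x,'a) strategy \<Rightarrow> 'x \<Rightarrow> ('x \<times> 'a) measure" where
  "occ_measure Y A p \<pi> x0 =
     measure_of (Y \<times> A) (sets (restrict_space borel (Y \<times> A)))
       (\<lambda>C. \<Sum>n. ennreal (measure_pmf.prob (sa_dist p \<pi> x0 n) C))"

definition occ_Y ::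
  "('x::topological_space) set \<Rightarrow> ('a::topological_space) set \<Rightarrow> ('x \<Rightarrow> 'a \<Rightarrow> 'x pmf)
     \<Rightarrow> ('x,'a) strategy \<Rightarrow> 'x \<Rightarrow> 'x measure" where
  "occ_Y Y A p \<pi> x0 =
     measure_of Y (sets (restrict_space borel Y)) (\<lambda>B. emeasure (occ_measure Y A p \<pi> x0) (B \<times> A))"

definition finite_measures_on :: "('x::topological_space) set \<Rightarrow> 'x measure set" where
  "finite_measures_on Y = {\<mu>. sets \<mu> = sets (restrict_space borel Y) \<and> finite_measure \<mu>}"

definition initial_topology :: "'m set \<Rightarrow> ('m \<Rightarrow> real) set \<Rightarrow> 'm topology" where
  "initial_topology M \<Phi> =
     topology_generated_by {{\<mu>\<in>M. \<phi> \<mu> \<in> U} | \<phi> U. \<phi> \<in> \<Phi> \<and> open U}"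

definition w_topology :: "('x::topological_space) set \<Rightarrow> 'x measure topology" where
  "w_topology Y = initial_topology (finite_measures_on Y)
     {(\<lambda>\<mu>. \<integral>x. f x \<partial>\<mu>) | f. continuous_on Y f \<and> bounded (f ` Y)}"

definition s_topology :: "('x::topological_space) set \<Rightarrow> 'x measure topology" where
  "s_topology Y = initial_topology (finite_measures_on Y)
     {(\<lambda>\<mu>. \<integral>x. f x \<partial>\<mu>) | f. f \<in> borel_measurable (restrict_space borel Y) \<and> bounded (f ` Y)}"

definition bseq :: "nat \<Rightarrow> real" where
  "bseq n = (\<Sum>i=1..n. (1/2::real)^i)"

text \<open>Delta is encoded as the real number 2, an isolated point of X.\<close>
definition Delta :: real where "Delta = 2"

definition Yset :: "real set" where "Yset = bseq ` {1..} \<union> {1}"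

definition Xset :: "real set" where "Xset = insert Delta Yset"

definition Aset :: "nat set" where "Aset = {1,2,3}"

definition kern :: "real \<Rightarrow> nat \<Rightarrow> real pmf" where
  "kern x a =
    (if x \<in> bseq ` {1..} then
       (let n = (THE n. 1 \<le> n \<and> x = bseq n) in
        if a = 1 then
          (if n = 1 then return_pmf Delta
           else map_pmf (\<lambda>c. if c then Delta else bseq n) (bernoulli_pmf ((1/2)^(n-2))))
        else if a = 2 then
          map_pmf (\<lambda>c. if c then Delta else bseq (Suc n)) (bernoulli_pmf (1/2))
        else
          map_pmf (\<lambda>k::nat. if k = 0 then Delta else if k = 1 then 1 else bseq (Suc n))
            (pmf_of_set {0,1,2,3}))
     else return_pmf Delta)"

definition psin :: "nat \<Rightarrow> real \<Rightarrow> nat" where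
  "psin n x = (if x \<in> bseq ` {1..n} then 2 else if x \<in> bseq ` {Suc n..} then 1 else 3)"

definition psi :: "real \<Rightarrow> nat" where "psi x = 3"

definition Lam :: "(real, nat) strategy set" where
  "Lam = {det_stationary (psin n) | n. 3 \<le> n} \<union> {det_stationary psi}"

end

theory Submission
  imports Defs
begin


lemma bseq_eq: "bseq n = 1 - (1/2)^n"
proof (induction n)
  case 0 then show ?case by (simp add: bseq_def)
next
  case (Suc n)
  have "bseq (Suc n) = bseq n + (1/2)^(Suc n)"
    unfolding bseq_def by (simp add: sum.atLeast1_atMost_eq)
  then show ?case using Suc by simp
qed

lemma bseq_inj: "bseq m = bseq n \<longleftrightarrow> m = n"
proof -
  have "((1::real)/2)^m = (1/2)^n \<longleftrightarrow> (2::real)^m = 2^n"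
    by (simp add: power_one_over)
  then show ?thesis by (simp add: bseq_eq)
qed

lemma bseq_less1: "bseq n < 1" by (simp add: bseq_eq)
lemma bseq_ne1[simp]: "bseq n \<noteq> 1" using bseq_less1[of n] by auto
lemma bseq_neD[simp]: "bseq n \<noteq> Delta" using bseq_less1[of n] by (auto simp: Delta_def)
lemma one_neD[simp]: "(1::real) \<noteq> Delta" by (simp add: Delta_def)
lemma D_ne_one[simp]: "Delta \<noteq> 1" by (simp add: Delta_def)
lemma D_ne_bseq[simp]: "Delta \<noteq> bseq n" using bseq_neD[of n] by metis
lemma one_ne_bseq[simp]: "1 \<noteq> bseq n" using bseq_ne1[of n] by metis
lemma bseq_inj'[simp]: "bseq m = bseq n \<longleftrightarrow> m = n" by (rule bseq_inj)

lemma D_notin[simp]: "Delta \<notin> bseq ` A" by auto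
lemma one_notin[simp]: "(1::real) \<notin> bseq ` A" by auto

lemma THE_bseq: "(THE k. 1 \<le> k \<and> bseq n = bseq k) = n" if "1 \<le> n"
  using that by (intro the_equality) auto

lemma kern_bseq: assumes that: "1 \<le> n" shows "kern (bseq n) a =
        (if a = 1 then
          (if n = 1 then return_pmf Delta
           else map_pmf (\<lambda>c. if c then Delta else bseq n) (bernoulli_pmf ((1/2)^(n-2))))
        else if a = 2 then
          map_pmf (\<lambda>c. if c then Delta else bseq (Suc n)) (bernoulli_pmf (1/2))
        else
          map_pmf (\<lambda>k::nat. if k = 0 then Delta else if k = 1 then 1 else bseq (Suc n))
            (pmf_of_set {0,1,2,3}))"
proof -
  have t: "(THE k. 1 \<le> k \<and> n = k) = n" using that by (intro the_equality) auto
  have "bseq n \<in> bseq ` {1..}" using that by auto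
  then show ?thesis unfolding kern_def Let_def by (simp only: if_True bseq_inj' t)
qed

lemma kern_other: "x \<notin> bseq ` {1..} \<Longrightarrow> kern x a = return_pmf Delta"
  unfolding kern_def by auto

lemma kern_Delta[simp]: "kern Delta a = return_pmf Delta" by (rule kern_other) auto
lemma kern_one[simp]: "kern 1 a = return_pmf Delta" by (rule kern_other) auto



lemma pmf_map_bool:
  assumes "0 \<le> p" "p \<le> 1"
  shows "pmf (map_pmf f (bernoulli_pmf p)) y = (if f True = y then p else 0) + (if f False = y then 1 - p else 0)"
proof -
  have "pmf (map_pmf f (bernoulli_pmf p)) y = sum (pmf (bernoulli_pmf p)) (f -` {y})"
    by (simp add: pmf_map measure_measure_pmf_finite)
  also have "\<dots> = (if f True = y then p else 0) + (if f False = y then 1 - p else 0)"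
  proof -
    have "f -` {y} = (if f True = y then {True} else {}) \<union> (if f False = y then {False} else {})"
      by (auto; case_tac x; auto)
    then show ?thesis using assms by (auto simp: sum.union_disjoint)
  qed
  finally show ?thesis .
qed

lemma pmf_map_pos4:
  "pmf (map_pmf f (pmf_of_set {0::nat,1,2,3})) y = card ({0,1,2,3} \<inter> f -` {y}) / 4"
  by (simp add: pmf_map measure_pmf_of_set)

lemma kern2_pmf: assumes "1 \<le> n" shows
  "pmf (kern (bseq n) 2) y = (if y = Delta then 1/2 else 0) + (if y = bseq (Suc n) then 1/2 else 0)"
  using assms by (auto simp: kern_bseq pmf_map_bool)

lemma kern2_set: assumes "1 \<le> n" shows "set_pmf (kern (bseq n) 2) \<subseteq> {Delta, bseq (Suc n)}"
  using assms by (auto simp: kern_bseq)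

lemma kern3_pmf: assumes "1 \<le> n" "a \<noteq> 1" "a \<noteq> 2" shows
  "pmf (kern (bseq n) a) y = (if y = Delta then 1/4 else 0) + (if y = 1 then 1/4 else 0)
      + (if y = bseq (Suc n) then 1/2 else 0)"
proof -
  let ?f = "\<lambda>k::nat. if k = 0 then Delta else if k = 1 then 1 else bseq (Suc n)"
  have "{0,1,2,3} \<inter> ?f -` {y} = (if y = Delta then {0} else {}) \<union> (if y = 1 then {1} else {})
      \<union> (if y = bseq (Suc n) then {2,3} else {})"
    by auto
  then have "card ({0,1,2,3} \<inter> ?f -` {y}) = (if y = Delta then 1 else 0) + (if y = 1 then 1 else 0)
      + (if y = bseq (Suc n) then 2 else 0)"
    by auto
  moreover have "kern (bseq n) a = map_pmf ?f (pmf_of_set {0,1,2,3})" using assms by (simp add: kern_bseq)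
  ultimately show ?thesis by (simp only: pmf_map_pos4) auto
qed

lemma kern3_set: assumes "1 \<le> n" "a \<noteq> 1" "a \<noteq> 2" shows
  "set_pmf (kern (bseq n) a) \<subseteq> {Delta, 1, bseq (Suc n)}"
  using assms by (auto simp: kern_bseq)

lemma kern1_pmf: assumes "2 \<le> n" shows
  "pmf (kern (bseq n) 1) y = (if y = Delta then (1/2)^(n-2) else 0) + (if y = bseq n then 1 - (1/2)^(n-2) else 0)"
proof -
  have "(0::real) \<le> (1/2)^(n-2)" "((1::real)/2)^(n-2) \<le> 1" by (auto simp: power_le_one)
  then show ?thesis using assms by (auto simp: kern_bseq pmf_map_bool)
qed

lemma kern1_set: assumes "2 \<le> n" shows "set_pmf (kern (bseq n) 1) \<subseteq> {Delta, bseq n}"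
  using assms by (auto simp: kern_bseq)

lemma kern11: "kern (bseq 1) 1 = return_pmf Delta"
  by (simp add: kern_bseq)



definition Vr :: "real \<Rightarrow> real" where
  "Vr x = (if x = Delta then 0 else if x \<in> bseq ` {1..} then
     (let n = (THE n. 1 \<le> n \<and> x = bseq n) in if n = 1 then 3 else 2^(n-2) + 5/2) else 1)"

lemma Vr_bseq: "1 \<le> n \<Longrightarrow> Vr (bseq n) = (if n = 1 then 3 else 2^(n-2) + 5/2)"
proof -
  assume that: "1 \<le> n"
  have t: "(THE k. 1 \<le> k \<and> n = k) = n" using that by (intro the_equality) auto
  have "bseq n \<in> bseq ` {1..}" using that by auto
  then show ?thesis unfolding Vr_def Let_def by (simp only: if_True if_False bseq_inj' t bseq_neD)
qed

lemma Vr_Delta[simp]: "Vr Delta = 0" by (simp add: Vr_def)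
lemma Vr_other: "x \<noteq> Delta \<Longrightarrow> x \<notin> bseq ` {1..} \<Longrightarrow> Vr x = 1" by (simp add: Vr_def)
lemma Vr_nonneg: "0 \<le> Vr x"
  by (auto simp: Vr_def Let_def)

definition cc :: "real \<Rightarrow> ennreal" where "cc x = (if x = Delta then 0 else 1)"

lemma nn_int_finite_support:
  assumes "finite A" "set_pmf M \<subseteq> A" "\<And>y. 0 \<le> f y"
  shows "(\<integral>\<^sup>+y. ennreal (f y) \<partial>measure_pmf M) = ennreal (\<Sum>y\<in>A. f y * pmf M y)"
proof -
  have "(\<integral>\<^sup>+y. ennreal (f y) \<partial>measure_pmf M) = (\<Sum>y\<in>A. ennreal (f y) * ennreal (pmf M y))"
    using assms by (intro nn_integral_measure_pmf_support) (auto simp: set_pmf_eq)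
  also have "\<dots> = ennreal (\<Sum>y\<in>A. f y * pmf M y)"
    using assms by (simp add: ennreal_mult'[symmetric])
  finally show ?thesis .
qed

lemma ennreal_plus1_le: "0 \<le> x \<Longrightarrow> x + 1 \<le> y \<Longrightarrow> ennreal x + 1 \<le> ennreal y"
  by (metis ennreal_1 ennreal_leI ennreal_plus zero_le_one)

lemma drift_real:
  assumes "1 \<le> n"
  shows "(\<integral>\<^sup>+y. ennreal (Vr y) \<partial>measure_pmf (kern (bseq n) a)) + 1 \<le> ennreal (Vr (bseq n))"
proof -
  have P: "(2::real)^(Suc n - 2) = (if n = 1 then 1 else 2 * 2^(n-2))"
  proof (cases "n = 1")
    case False
    then obtain m where "n - 2 = m" "Suc n - 2 = Suc m" using assms by (metis Suc_diff_le diff_Suc_Suc le_Suc_eq le_antisym numeral_2_eq_2 one_add_one plus_1_eq_Suc not_less_eq_eq)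
    then show ?thesis using False by simp
  qed simp
  consider "a = 1" "n = 1" | "a = 1" "n \<ge> 2" | "a = 2" | "a \<noteq> 1" "a \<noteq> 2" using assms by linarith
  then show ?thesis
  proof cases
    case 1
    have "kern (bseq n) a = return_pmf Delta" using 1 kern11 by simp
    then show ?thesis using 1 by (simp add: Vr_bseq)
  next
    case 2
    have "(\<integral>\<^sup>+y. ennreal (Vr y) \<partial>measure_pmf (kern (bseq n) a)) =
        ennreal (\<Sum>y\<in>{Delta, bseq n}. Vr y * pmf (kern (bseq n) a) y)"
      using 2 kern1_set[of n] by (intro nn_int_finite_support) (auto simp: Vr_nonneg)
    also have "\<dots> = ennreal ((2^(n-2) + 5/2) * (1 - (1/2)^(n-2)))"
      using 2 kern1_pmf[of n "bseq n"] kern1_pmf[of n Delta] by (simp add: Vr_bseq)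
    finally have e: "(\<integral>\<^sup>+y. ennreal (Vr y) \<partial>measure_pmf (kern (bseq n) a)) = ennreal ((2^(n-2) + 5/2) * (1 - (1/2)^(n-2)))" .
    have pos: "(0::real) < 2^(n-2)" by simp
    have q: "((1::real)/2)^(n-2) = 1 / 2^(n-2)" by (simp add: power_one_over)
    have ineq: "((2::real)^(n-2) + 5/2) * (1 - (1/2)^(n-2)) + 1 \<le> 2^(n-2) + 5/2"
      unfolding q using pos by (simp add: field_simps)
    have nn: "0 \<le> ((2::real)^(n-2) + 5/2) * (1 - (1/2)^(n-2))"
      by (intro mult_nonneg_nonneg) (auto simp: power_le_one)
    show ?thesis unfolding e using 2 ineq nn
      by (simp only: Vr_bseq if_False) (intro ennreal_plus1_le, auto)
  next
    case 3
    have "(\<integral>\<^sup>+y. ennreal (Vr y) \<partial>measure_pmf (kern (bseq n) a)) =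
        ennreal (\<Sum>y\<in>{Delta, bseq (Suc n)}. Vr y * pmf (kern (bseq n) a) y)"
      using 3 kern2_set[of n] assms by (intro nn_int_finite_support) (auto simp: Vr_nonneg)
    also have "\<dots> = ennreal (Vr (bseq (Suc n)) / 2)"
      using 3 assms by (simp add: kern2_pmf)
    finally have e: "(\<integral>\<^sup>+y. ennreal (Vr y) \<partial>measure_pmf (kern (bseq n) a)) = ennreal (Vr (bseq (Suc n)) / 2)" .
    have ineq: "Vr (bseq (Suc n)) / 2 + 1 \<le> Vr (bseq n)"
      using assms P by (auto simp: Vr_bseq field_simps)
    show ?thesis unfolding e using ineq Vr_nonneg[of "bseq (Suc n)"]
      by (intro ennreal_plus1_le) auto
  next
    case 4
    have "(\<integral>\<^sup>+y. ennreal (Vr y) \<partial>measure_pmf (kern (bseq n) a)) =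
        ennreal (\<Sum>y\<in>{Delta, 1, bseq (Suc n)}. Vr y * pmf (kern (bseq n) a) y)"
      using 4 kern3_set[of n a] assms by (intro nn_int_finite_support) (auto simp: Vr_nonneg)
    also have "\<dots> = ennreal (1/4 + Vr (bseq (Suc n)) / 2)"
      using 4 assms by (simp add: kern3_pmf Vr_other)
    finally have e: "(\<integral>\<^sup>+y. ennreal (Vr y) \<partial>measure_pmf (kern (bseq n) a)) = ennreal (1/4 + Vr (bseq (Suc n)) / 2)" .
    have ineq: "1/4 + Vr (bseq (Suc n)) / 2 + 1 \<le> Vr (bseq n)"
      using assms P by (auto simp: Vr_bseq field_simps)
    show ?thesis unfolding e using ineq Vr_nonneg[of "bseq (Suc n)"]
      by (intro ennreal_plus1_le) auto
  qed
qed

lemma drift: "(\<integral>\<^sup>+y. ennreal (Vr y) \<partial>measure_pmf (kern x a)) + cc x \<le> ennreal (Vr x)"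
proof (cases "x \<in> bseq ` {1..}")
  case True
  then obtain n where "1 \<le> n" "x = bseq n" by auto
  then show ?thesis using drift_real[of n a] by (simp add: cc_def)
next
  case False
  then show ?thesis by (cases "x = Delta") (auto simp: kern_other cc_def Vr_other)
qed



lemma inner_drift:
  "(\<integral>\<^sup>+a. (\<integral>\<^sup>+y. ennreal (Vr y) \<partial>measure_pmf (kern x a)) \<partial>measure_pmf Q) + cc x \<le> ennreal (Vr x)"
proof -
  have "(\<integral>\<^sup>+a. (\<integral>\<^sup>+y. ennreal (Vr y) \<partial>measure_pmf (kern x a)) \<partial>measure_pmf Q) + cc x
      = (\<integral>\<^sup>+a. (\<integral>\<^sup>+y. ennreal (Vr y) \<partial>measure_pmf (kern x a)) + cc x \<partial>measure_pmf Q)"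
    by (simp add: nn_integral_add measure_pmf.emeasure_space_1)
  also have "\<dots> \<le> (\<integral>\<^sup>+a. ennreal (Vr x) \<partial>measure_pmf Q)"
    by (intro nn_integral_mono drift)
  also have "\<dots> = ennreal (Vr x)" by (simp add: measure_pmf.emeasure_space_1)
  finally show ?thesis .
qed

lemma hist_step:
  "(\<integral>\<^sup>+h. ennreal (Vr (snd h)) \<partial>measure_pmf (hist_dist kern \<pi> x0 (Suc t)))
    + (\<integral>\<^sup>+h. cc (snd h) \<partial>measure_pmf (hist_dist kern \<pi> x0 t))
   \<le> (\<integral>\<^sup>+h. ennreal (Vr (snd h)) \<partial>measure_pmf (hist_dist kern \<pi> x0 t))"
proof -
  have "(\<integral>\<^sup>+h. ennreal (Vr (snd h)) \<partial>measure_pmf (hist_dist kern \<pi> x0 (Suc t)))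
    + (\<integral>\<^sup>+h. cc (snd h) \<partial>measure_pmf (hist_dist kern \<pi> x0 t))
    = (\<integral>\<^sup>+h. (\<integral>\<^sup>+a. (\<integral>\<^sup>+y. ennreal (Vr y) \<partial>measure_pmf (kern (snd h) a)) \<partial>measure_pmf (\<pi> (Suc t) h))
        + cc (snd h) \<partial>measure_pmf (hist_dist kern \<pi> x0 t))"
    by (simp only: hist_dist.simps nn_integral_bind_pmf nn_integral_map_pmf snd_conv nn_integral_add[symmetric] measurable_pmf_measure1 UNIV_I Pi_I space_borel)
  also have "\<dots> \<le> (\<integral>\<^sup>+h. ennreal (Vr (snd h)) \<partial>measure_pmf (hist_dist kern \<pi> x0 t))"
    by (intro nn_integral_mono inner_drift)
  finally show ?thesis .
qed

lemma hist_sum: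
  "(\<Sum>s<t. (\<integral>\<^sup>+h. cc (snd h) \<partial>measure_pmf (hist_dist kern \<pi> x0 s)))
    + (\<integral>\<^sup>+h. ennreal (Vr (snd h)) \<partial>measure_pmf (hist_dist kern \<pi> x0 t)) \<le> ennreal (Vr x0)"
proof (induction t)
  case 0
  then show ?case by simp
next
  case (Suc t)
  let ?S = "(\<Sum>s<t. (\<integral>\<^sup>+h. cc (snd h) \<partial>measure_pmf (hist_dist kern \<pi> x0 s)))"
  let ?C = "(\<integral>\<^sup>+h. cc (snd h) \<partial>measure_pmf (hist_dist kern \<pi> x0 t))"
  let ?E = "\<lambda>t. (\<integral>\<^sup>+h. ennreal (Vr (snd h)) \<partial>measure_pmf (hist_dist kern \<pi> x0 t))"
  have "?S + ?C + ?E (Suc t) = ?S + (?E (Suc t) + ?C)" by (simp add: ac_simps)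
  also have "\<dots> \<le> ?S + ?E t" by (intro add_left_mono hist_step)
  also have "\<dots> \<le> ennreal (Vr x0)" by (rule Suc)
  finally show ?case by simp
qed

lemma cc_int: "(\<integral>\<^sup>+h. cc (snd h) \<partial>measure_pmf M) = emeasure (measure_pmf M) {h. snd h \<noteq> Delta}"
proof -
  have "(\<integral>\<^sup>+h. cc (snd h) \<partial>measure_pmf M) = (\<integral>\<^sup>+h. indicator {h. snd h \<noteq> Delta} h \<partial>measure_pmf M)"
    by (intro nn_integral_cong) (auto simp: cc_def)
  then show ?thesis by simp
qed

lemma tau_le_cc: "ennreal (tau_gt_prob Delta kern \<pi> x0 t) \<le> (\<integral>\<^sup>+h. cc (snd h) \<partial>measure_pmf (hist_dist kern \<pi> x0 t))"
proof -
  have "ennreal (tau_gt_prob Delta kern \<pi> x0 t) = emeasure (measure_pmf (hist_dist kern \<pi> x0 t)) {h. Delta \<notin> states_of h}"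
    by (simp add: tau_gt_prob_def measure_pmf.emeasure_eq_measure)
  also have "\<dots> \<le> emeasure (measure_pmf (hist_dist kern \<pi> x0 t)) {h. snd h \<noteq> Delta}"
    by (intro emeasure_mono) (auto simp: states_of_def)
  finally show ?thesis by (simp add: cc_int)
qed

lemma exp_tau_le: "exp_tau Delta kern \<pi> x0 \<le> ennreal (Vr x0)"
proof -
  have "exp_tau Delta kern \<pi> x0 = (\<Sum>t. ennreal (tau_gt_prob Delta kern \<pi> x0 t))"
    by (simp add: exp_tau_def tail_tau_def)
  also have "\<dots> \<le> ennreal (Vr x0)"
  proof (rule suminf_le_const)
    fix n
    have "(\<Sum>t<n. ennreal (tau_gt_prob Delta kern \<pi> x0 t)) \<le> (\<Sum>s<n. (\<integral>\<^sup>+h. cc (snd h) \<partial>measure_pmf (hist_dist kern \<pi> x0 s)))"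
      by (intro sum_mono tau_le_cc)
    also have "\<dots> \<le> (\<Sum>s<n. (\<integral>\<^sup>+h. cc (snd h) \<partial>measure_pmf (hist_dist kern \<pi> x0 s)))
      + (\<integral>\<^sup>+h. ennreal (Vr (snd h)) \<partial>measure_pmf (hist_dist kern \<pi> x0 n))" by (rule add_increasing2) auto
    also have "\<dots> \<le> ennreal (Vr x0)" by (rule hist_sum)
    finally show "(\<Sum>t<n. ennreal (tau_gt_prob Delta kern \<pi> x0 t)) \<le> ennreal (Vr x0)" .
  qed simp
  finally show ?thesis .
qed

lemma absorbing_thm: "absorbing Delta kern Aset (bseq 1)"
  unfolding absorbing_def
proof
  fix \<pi> :: "(real, nat) strategy"
  have "exp_tau Delta kern \<pi> (bseq 1) \<le> ennreal 3" using exp_tau_le[of \<pi> "bseq 1"] by (simp add: Vr_bseq)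
  then show "exp_tau Delta kern \<pi> (bseq 1) < \<infinity>" by (rule le_less_trans) simp
qed



lemma D_Suc: "map_pmf snd (hist_dist p (det_stationary \<phi>) x0 (Suc t)) =
   bind_pmf (map_pmf snd (hist_dist p (det_stationary \<phi>) x0 t)) (\<lambda>x. p x (\<phi> x))"
  by (simp add: det_stationary_def map_bind_pmf bind_return_pmf map_pmf_comp bind_map_pmf)

lemma sa_det: "sa_dist p (det_stationary \<phi>) x0 t = map_pmf (\<lambda>x. (x, \<phi> x)) (map_pmf snd (hist_dist p (det_stationary \<phi>) x0 t))"
  by (simp add: sa_dist_def det_stationary_def map_pmf_def bind_return_pmf bind_assoc_pmf)

lemma absorbed_inv: "h \<in> set_pmf (hist_dist kern \<pi> x0 t) \<Longrightarrow> Delta \<in> states_of h \<Longrightarrow> snd h = Delta"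
proof (induction t arbitrary: h)
  case 0
  then show ?case by (auto simp: states_of_def)
next
  case (Suc t)
  then obtain h0 a y where h0: "h0 \<in> set_pmf (hist_dist kern \<pi> x0 t)" and y: "y \<in> set_pmf (kern (snd h0) a)"
    and h: "h = (fst h0 @ [(snd h0, a)], y)" by auto
  have "states_of h = insert y (states_of h0)" using h by (auto simp: states_of_def)
  moreover have "Delta \<in> states_of h0 \<Longrightarrow> y = Delta"
  proof -
    assume "Delta \<in> states_of h0"
    then have "snd h0 = Delta" using Suc.IH h0 by blast
    then show "y = Delta" using y by simp
  qed
  ultimately show ?case using Suc.prems h by auto
qed

lemma pmf_return_D: "pmf (return_pmf Delta) y = (if y = Delta then 1 else 0)"
  by simp

definition Dp :: "(real \<Rightarrow> nat) \<Rightarrow> nat \<Rightarrow> real pmf" where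
  "Dp \<phi> t = map_pmf snd (hist_dist kern (det_stationary \<phi>) (bseq 1) t)"

lemma Dp_0: "Dp \<phi> 0 = return_pmf (bseq 1)" by (simp add: Dp_def)
lemma Dp_Suc: "Dp \<phi> (Suc t) = bind_pmf (Dp \<phi> t) (\<lambda>x. kern x (\<phi> x))"
  unfolding Dp_def by (rule D_Suc)

lemma pmf_bind_fin:
  assumes "finite A" "set_pmf M \<subseteq> A"
  shows "pmf (bind_pmf M K) y = (\<Sum>x\<in>A. pmf (K x) y * pmf M x)"
  unfolding pmf_bind using assms by (intro integral_measure_pmf_real) auto

lemma psi_3: "psi x = 3" by (simp add: psi_def)

lemma psieq: "(\<lambda>a::real. 3::nat) = psi" by (simp add: psi_def fun_eq_iff)

lemma Dpsi:
  "set_pmf (Dp psi t) \<subseteq> {bseq (Suc t), 1, Delta} \<and> pmf (Dp psi t) (bseq (Suc t)) = (1/2)^t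
   \<and> pmf (Dp psi t) 1 = (if t = 0 then 0 else (1/2)^(t+1))"
proof (induction t)
  case 0
  then show ?case by (simp add: Dp_0)
next
  case (Suc t)
  have S: "set_pmf (Dp psi t) \<subseteq> {bseq (Suc t), 1, Delta}" using Suc by blast
  have k: "kern (bseq (Suc t)) (psi (bseq (Suc t))) = kern (bseq (Suc t)) 3" by (simp add: psi_def)
  have set: "set_pmf (Dp psi (Suc t)) \<subseteq> {bseq (Suc (Suc t)), 1, Delta}"
  proof -
    have "set_pmf (kern x (psi x)) \<subseteq> {bseq (Suc (Suc t)), 1, Delta}" if "x \<in> {bseq (Suc t), 1, Delta}" for x
      using that kern3_set[of "Suc t" 3] by (auto simp: k)
    then show ?thesis using S unfolding Dp_Suc set_bind_pmf by blast
  qed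
  have "pmf (Dp psi (Suc t)) y = (\<Sum>x\<in>{bseq (Suc t), 1, Delta}. pmf (kern x (psi x)) y * pmf (Dp psi t) x)" for y
    unfolding Dp_Suc by (rule pmf_bind_fin[OF _ S]) auto
  then have e: "pmf (Dp psi (Suc t)) y = pmf (kern (bseq (Suc t)) 3) y * pmf (Dp psi t) (bseq (Suc t))
      + (if y = Delta then pmf (Dp psi t) 1 + pmf (Dp psi t) Delta else 0)" for y
    by (cases "y = Delta") (simp_all add: psi_3 psieq pmf_return_D del: pmf_return)
  show ?case using set Suc by (simp add: e kern3_pmf)
qed

lemma psin_low: "1 \<le> k \<Longrightarrow> k \<le> N \<Longrightarrow> psin N (bseq k) = 2"
  by (auto simp: psin_def)
lemma psin_high: "N < k \<Longrightarrow> psin N (bseq k) = 1"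
proof -
  assume "N < k"
  then have "bseq k \<notin> bseq ` {1..N}" "bseq k \<in> bseq ` {Suc N..}" by auto
  then show ?thesis by (simp add: psin_def)
qed

lemma DpsinA:
  "t \<le> N \<Longrightarrow> set_pmf (Dp (psin N) t) \<subseteq> {bseq (Suc t), Delta} \<and> pmf (Dp (psin N) t) (bseq (Suc t)) = (1/2)^t"
proof (induction t)
  case 0
  then show ?case by (simp add: Dp_0)
next
  case (Suc t)
  then have S: "set_pmf (Dp (psin N) t) \<subseteq> {bseq (Suc t), Delta}" and P: "pmf (Dp (psin N) t) (bseq (Suc t)) = (1/2)^t"
    by auto
  have k: "psin N (bseq (Suc t)) = 2" using Suc by (intro psin_low) auto
  have set: "set_pmf (Dp (psin N) (Suc t)) \<subseteq> {bseq (Suc (Suc t)), Delta}"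
  proof -
    have "set_pmf (kern x (psin N x)) \<subseteq> {bseq (Suc (Suc t)), Delta}" if "x \<in> {bseq (Suc t), Delta}" for x
      using that kern2_set[of "Suc t"] by (auto simp: k)
    then show ?thesis using S unfolding Dp_Suc set_bind_pmf by blast
  qed
  have "pmf (Dp (psin N) (Suc t)) y = (\<Sum>x\<in>{bseq (Suc t), Delta}. pmf (kern x (psin N x)) y * pmf (Dp (psin N) t) x)" for y
    unfolding Dp_Suc by (rule pmf_bind_fin[OF _ S]) auto
  then have e: "pmf (Dp (psin N) (Suc t)) y = pmf (kern (bseq (Suc t)) 2) y * pmf (Dp (psin N) t) (bseq (Suc t))
      + (if y = Delta then pmf (Dp (psin N) t) Delta else 0)" for y
    by (cases "y = Delta") (simp_all add: k pmf_return_D del: pmf_return)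
  show ?case using set P by (simp add: e kern2_pmf)
qed

lemma DpsinB:
  assumes "3 \<le> N"
  shows "set_pmf (Dp (psin N) (N + s)) \<subseteq> {bseq (Suc N), Delta} \<and>
    pmf (Dp (psin N) (N + s)) (bseq (Suc N)) = (1/2)^N * (1 - (1/2)^(N - 1))^s"
proof (induction s)
  case 0
  then show ?case using DpsinA[of N N] by simp
next
  case (Suc s)
  then have S: "set_pmf (Dp (psin N) (N + s)) \<subseteq> {bseq (Suc N), Delta}"
    and P: "pmf (Dp (psin N) (N + s)) (bseq (Suc N)) = (1/2)^N * (1 - (1/2)^(N - 1))^s"
    by auto
  have k: "psin N (bseq (Suc N)) = 1" by (intro psin_high) auto
  have set: "set_pmf (Dp (psin N) (N + Suc s)) \<subseteq> {bseq (Suc N), Delta}"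
  proof -
    have "set_pmf (kern x (psin N x)) \<subseteq> {bseq (Suc N), Delta}" if "x \<in> {bseq (Suc N), Delta}" for x
      using that kern1_set[of "Suc N"] assms by (auto simp: k)
    then show ?thesis using S unfolding add_Suc_right Dp_Suc set_bind_pmf by blast
  qed
  have "pmf (Dp (psin N) (N + Suc s)) y = (\<Sum>x\<in>{bseq (Suc N), Delta}. pmf (kern x (psin N x)) y * pmf (Dp (psin N) (N + s)) x)" for y
    unfolding add_Suc_right Dp_Suc by (rule pmf_bind_fin[OF _ S]) auto
  then have e: "pmf (Dp (psin N) (N + Suc s)) y = pmf (kern (bseq (Suc N)) 1) y * pmf (Dp (psin N) (N + s)) (bseq (Suc N))
      + (if y = Delta then pmf (Dp (psin N) (N + s)) Delta else 0)" for y
    by (cases "y = Delta") (simp_all add: k pmf_return_D del: pmf_return)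
  have "pmf (kern (bseq (Suc N)) 1) (bseq (Suc N)) = 1 - (1/2)^(N-1)"
    using kern1_pmf[of "Suc N" "bseq (Suc N)"] assms by simp
  then show ?case using set P e[of "bseq (Suc N)"] by simp
qed



lemma sets_rc:
  fixes \<Omega> :: "'a::t1_space set"
  assumes "countable \<Omega>"
  shows "sets (restrict_space borel \<Omega>) = Pow \<Omega>"
proof -
  have "C \<in> sets borel" if "C \<subseteq> \<Omega>" for C
  proof (rule sets.countable)
    show "countable C" using assms that countable_subset by blast
  qed (auto intro: borel_closed)
  then have "C \<in> (\<inter>) \<Omega> ` sets borel" if "C \<subseteq> \<Omega>" for C
    using that by (intro image_eqI[of _ _ C]) auto
  then show ?thesis unfolding sets_restrict_space by auto
qed

lemma countable_Yset: "countable Yset"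
  unfolding Yset_def by auto

lemma countable_YA: "countable (Yset \<times> Aset)"
  using countable_Yset by (auto simp: Aset_def)

lemma suminf_swap_ennreal: "(\<Sum>i. \<Sum>n. f i n :: ennreal) = (\<Sum>n. \<Sum>i. f i n)"
proof -
  have "(\<Sum>i. \<Sum>n. f i n) = (\<integral>\<^sup>+i. (\<Sum>n. f i n) \<partial>count_space UNIV)"
    by (simp add: nn_integral_count_space_nat)
  also have "\<dots> = (\<Sum>n. \<integral>\<^sup>+i. f i n \<partial>count_space UNIV)"
    by (rule nn_integral_suminf) auto
  also have "\<dots> = (\<Sum>n. \<Sum>i. f i n)" by (simp add: nn_integral_count_space_nat)
  finally show ?thesis .
qed

lemma ca_sum: "countably_additive (Pow \<Omega>) (\<lambda>C. \<Sum>n. emeasure (measure_pmf (M n)) C)"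
  unfolding countably_additive_def
proof (intro allI impI)
  fix A :: "nat \<Rightarrow> _" assume "range A \<subseteq> Pow \<Omega>" "disjoint_family A"
  have "(\<Sum>i. \<Sum>n. emeasure (measure_pmf (M n)) (A i)) = (\<Sum>n. \<Sum>i. emeasure (measure_pmf (M n)) (A i))"
    by (rule suminf_swap_ennreal)
  also have "\<dots> = (\<Sum>n. emeasure (measure_pmf (M n)) (\<Union> (range A)))"
    using \<open>disjoint_family A\<close> by (simp add: suminf_emeasure)
  finally show "(\<Sum>i. \<Sum>n. emeasure (measure_pmf (M n)) (A i)) = (\<Sum>n. emeasure (measure_pmf (M n)) (\<Union> (range A)))" .
qed

lemma occ_measure_sets: "sets (occ_measure Yset Aset p \<pi> x0) = Pow (Yset \<times> Aset)"
  unfolding occ_measure_def sets_rc[OF countable_YA]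
  by (simp add: sigma_algebra.sigma_sets_eq[OF sigma_algebra_Pow])

lemma occ_measure_em:
  assumes "C \<subseteq> Yset \<times> Aset"
  shows "emeasure (occ_measure Yset Aset p \<pi> x0) C = (\<Sum>n. emeasure (measure_pmf (sa_dist p \<pi> x0 n)) C)"
proof -
  have f: "(\<lambda>C. \<Sum>n. ennreal (measure_pmf.prob (sa_dist p \<pi> x0 n) C)) = (\<lambda>C. \<Sum>n. emeasure (measure_pmf (sa_dist p \<pi> x0 n)) C)"
    by (simp add: measure_pmf.emeasure_eq_measure)
  show ?thesis
    unfolding occ_measure_def sets_rc[OF countable_YA] f
    by (rule emeasure_measure_of_sigma[OF sigma_algebra_Pow _ ca_sum]) (use assms in \<open>auto simp: positive_def\<close>)
qed

lemma occ_Y_sets: "sets (occ_Y Yset Aset p \<pi> x0) = Pow Yset"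
  unfolding occ_Y_def sets_rc[OF countable_Yset]
  by (simp add: sigma_algebra.sigma_sets_eq[OF sigma_algebra_Pow])

lemma occ_Y_em:
  assumes "B \<subseteq> Yset"
  shows "emeasure (occ_Y Yset Aset p \<pi> x0) B = emeasure (occ_measure Yset Aset p \<pi> x0) (B \<times> Aset)"
  unfolding occ_Y_def sets_rc[OF countable_Yset]
proof (rule emeasure_measure_of_sigma[OF sigma_algebra_Pow])
  show "positive (Pow Yset) (\<lambda>B. emeasure (occ_measure Yset Aset p \<pi> x0) (B \<times> Aset))"
    by (simp add: positive_def)
  show "countably_additive (Pow Yset) (\<lambda>B. emeasure (occ_measure Yset Aset p \<pi> x0) (B \<times> Aset))"
    unfolding countably_additive_def
  proof (intro allI impI)
    fix A :: "nat \<Rightarrow> _" assume A: "range A \<subseteq> Pow Yset" "disjoint_family A"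
    have "(\<Sum>i. emeasure (occ_measure Yset Aset p \<pi> x0) (A i \<times> Aset)) = emeasure (occ_measure Yset Aset p \<pi> x0) (\<Union>i. A i \<times> Aset)"
      using A by (intro suminf_emeasure) (auto simp: occ_measure_sets disjoint_family_on_def, blast)
    also have "(\<Union>i. A i \<times> Aset) = (\<Union> (range A)) \<times> Aset" by auto
    finally show "(\<Sum>i. emeasure (occ_measure Yset Aset p \<pi> x0) (A i \<times> Aset)) = emeasure (occ_measure Yset Aset p \<pi> x0) (\<Union> (range A) \<times> Aset)" .
  qed
qed (use assms in auto)

lemma sa_fst:
  assumes "\<And>x. \<phi> x \<in> Aset"
  shows "emeasure (measure_pmf (sa_dist kern (det_stationary \<phi>) (bseq 1) n)) (B \<times> Aset) = emeasure (measure_pmf (Dp \<phi> n)) B"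
proof -
  let ?M = "sa_dist kern (det_stationary \<phi>) (bseq 1) n"
  have s: "set_pmf ?M \<subseteq> UNIV \<times> Aset" using assms by (auto simp: sa_det)
  have "emeasure ?M (B \<times> Aset) = emeasure ?M ((B \<times> Aset) \<inter> set_pmf ?M)" by (simp add: emeasure_Int_set_pmf)
  also have "(B \<times> Aset) \<inter> set_pmf ?M = (fst -` B) \<inter> set_pmf ?M" using s by auto
  also have "emeasure ?M \<dots> = emeasure ?M (fst -` B)" by (simp add: emeasure_Int_set_pmf)
  also have "\<dots> = emeasure (map_pmf fst ?M) B" by simp
  also have "map_pmf fst ?M = Dp \<phi> n" by (simp add: sa_det Dp_def map_pmf_comp)
  finally show ?thesis .
qed

lemma em_pmf_ind: "emeasure (measure_pmf M) B = (\<integral>\<^sup>+y. ennreal (pmf M y) * indicator B y \<partial>count_space UNIV)"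
proof -
  have "emeasure (measure_pmf M) B = (\<integral>\<^sup>+y. ennreal (pmf M y) \<partial>count_space B)" by (simp add: nn_integral_pmf)
  also have "\<dots> = (\<integral>\<^sup>+y. ennreal (pmf M y) * indicator B y \<partial>count_space UNIV)"
    by (simp add: nn_integral_restrict_space[symmetric] restrict_count_space)
  finally show ?thesis .
qed

definition Wsum :: "(real \<Rightarrow> nat) \<Rightarrow> real \<Rightarrow> ennreal" where
  "Wsum \<phi> y = (\<Sum>n. ennreal (pmf (Dp \<phi> n) y))"

lemma occ_Y_density:
  assumes "\<And>x. \<phi> x \<in> Aset"
  shows "occ_Y Yset Aset kern (det_stationary \<phi>) (bseq 1) = density (count_space Yset) (Wsum \<phi>)"
proof (rule measure_eqI)
  show "sets (occ_Y Yset Aset kern (det_stationary \<phi>) (bseq 1)) = sets (density (count_space Yset) (Wsum \<phi>))"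
    by (simp add: occ_Y_sets)
  fix B assume "B \<in> sets (occ_Y Yset Aset kern (det_stationary \<phi>) (bseq 1))"
  then have B: "B \<subseteq> Yset" by (simp add: occ_Y_sets)
  have "emeasure (occ_Y Yset Aset kern (det_stationary \<phi>) (bseq 1)) B = (\<Sum>n. emeasure (measure_pmf (Dp \<phi> n)) B)"
  proof -
    have BA: "B \<times> Aset \<subseteq> Yset \<times> Aset" using B by auto
    show ?thesis by (simp only: occ_Y_em[OF B] occ_measure_em[OF BA] sa_fst[OF assms])
  qed
  also have "\<dots> = (\<Sum>n. \<integral>\<^sup>+y. ennreal (pmf (Dp \<phi> n) y) * indicator B y \<partial>count_space UNIV)"
    by (intro suminf_cong) (rule em_pmf_ind)
  also have "\<dots> = (\<integral>\<^sup>+y. (\<Sum>n. ennreal (pmf (Dp \<phi> n) y) * indicator B y) \<partial>count_space UNIV)"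
    by (rule nn_integral_suminf[symmetric]) simp
  also have "\<dots> = (\<integral>\<^sup>+y. Wsum \<phi> y * indicator B y * indicator Yset y \<partial>count_space UNIV)"
  proof (intro nn_integral_cong)
    fix y
    show "(\<Sum>n. ennreal (pmf (Dp \<phi> n) y) * indicator B y) = Wsum \<phi> y * indicator B y * indicator Yset y"
      unfolding Wsum_def ennreal_suminf_multc
      by (cases "y \<in> B") (use B in \<open>auto simp: indicator_def\<close>)
  qed
  also have "\<dots> = emeasure (density (count_space Yset) (Wsum \<phi>)) B"
    using B by (simp add: emeasure_density nn_integral_count_space_indicator[where X=Yset])
  finally show "emeasure (occ_Y Yset Aset kern (det_stationary \<phi>) (bseq 1)) B = emeasure (density (count_space Yset) (Wsum \<phi>)) B" .
qed



definition gY :: "nat \<Rightarrow> real" where "gY n = (if n = 0 then 1 else bseq n)"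

lemma gY_0[simp]: "gY 0 = 1" and gY_Suc[simp]: "gY (Suc k) = bseq (Suc k)"
  by (auto simp: gY_def)

lemma inj_gY: "inj gY"
  unfolding inj_def gY_def by auto

lemma range_gY: "range gY = Yset"
proof -
  have "gY ` UNIV \<subseteq> Yset" by (auto simp: gY_def Yset_def)
  moreover have "Yset \<subseteq> gY ` UNIV"
  proof
    fix y assume "y \<in> Yset"
    then consider "y = 1" | n where "1 \<le> n" "y = bseq n" by (auto simp: Yset_def)
    then show "y \<in> gY ` UNIV"
    proof cases
      case 1 then show ?thesis by (intro image_eqI[of _ _ 0]) auto
    next
      case 2 then show ?thesis by (intro image_eqI[of _ _ n]) (auto simp: gY_def)
    qed
  qed
  ultimately show ?thesis by blast
qed

lemma bij_gY: "bij_betw gY UNIV Yset"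
  using inj_gY range_gY by (simp add: bij_betw_def)

lemma gY_in: "gY n \<in> Yset" using range_gY by auto

definition Wof :: "(nat \<Rightarrow> real) \<Rightarrow> real \<Rightarrow> real" where
  "Wof w y = w (the_inv_into UNIV gY y)"

lemma Wof_gY[simp]: "Wof w (gY n) = w n"
  by (simp add: Wof_def the_inv_into_f_f[OF inj_gY])

definition mu :: "(nat \<Rightarrow> real) \<Rightarrow> real measure" where
  "mu w = density (count_space Yset) (\<lambda>y. ennreal (Wof w y))"

lemma count_Y_distr: "count_space Yset = distr (count_space UNIV) (count_space Yset) gY"
  using distr_bij_count_space[OF bij_gY] by simp

lemma mu_integral:
  assumes w: "\<And>n. 0 \<le> w n" "summable w" and f: "\<And>y. y \<in> Yset \<Longrightarrow> \<bar>f y\<bar> \<le> M"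
  shows "summable (\<lambda>n. w n * f (gY n))" "integral\<^sup>L (mu w) f = (\<Sum>n. w n * f (gY n))"
proof -
  have nW: "0 \<le> Wof w y" for y by (simp add: Wof_def w)
  show sm: "summable (\<lambda>n. w n * f (gY n))"
  proof (rule summable_comparison_test)
    show "\<exists>N. \<forall>n\<ge>N. norm (w n * f (gY n)) \<le> w n * M"
      using w f[OF gY_in] by (auto simp: abs_mult intro!: mult_left_mono)
    show "summable (\<lambda>n. w n * M)" using w by (intro summable_mult2)
  qed
  have "integral\<^sup>L (mu w) f = integral\<^sup>L (count_space Yset) (\<lambda>y. Wof w y * f y)"
    unfolding mu_def by (subst integral_density) (auto simp: nW)
  also have "\<dots> = integral\<^sup>L (count_space UNIV) (\<lambda>n. Wof w (gY n) * f (gY n))"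
  proof -
    have "integral\<^sup>L (count_space Yset) (\<lambda>y. Wof w y * f y) = integral\<^sup>L (distr (count_space UNIV) (count_space Yset) gY) (\<lambda>y. Wof w y * f y)"
      using count_Y_distr by simp
    also have "\<dots> = integral\<^sup>L (count_space UNIV) (\<lambda>n. Wof w (gY n) * f (gY n))"
      by (rule integral_distr) (auto simp: gY_in)
    finally show ?thesis .
  qed
  also have "\<dots> = (\<Sum>n. w n * f (gY n))"
  proof (simp, rule integral_count_space_nat)
    show "integrable (count_space UNIV) (\<lambda>n. w n * f (gY n))"
      unfolding integrable_count_space_nat_iff
    proof (rule summable_comparison_test)
      show "\<exists>N. \<forall>n\<ge>N. norm (norm (w n * f (gY n))) \<le> w n * M"
        using w f[OF gY_in] by (auto simp: abs_mult intro!: mult_left_mono)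
      show "summable (\<lambda>n. w n * M)" using w by (intro summable_mult2)
    qed
  qed
  finally show "integral\<^sup>L (mu w) f = (\<Sum>n. w n * f (gY n))" .
qed



lemma mu_sets: "sets (mu w) = Pow Yset" by (simp add: mu_def)

lemma mu_fm:
  assumes w: "\<And>n. 0 \<le> w n" "summable w"
  shows "mu w \<in> finite_measures_on Yset"
proof -
  have nW: "0 \<le> Wof w y" for y by (simp add: Wof_def w)
  have "emeasure (mu w) (space (mu w)) = emeasure (mu w) Yset" by (simp add: mu_def)
  also have "\<dots> = (\<integral>\<^sup>+y. ennreal (Wof w y) * indicator Yset y \<partial>count_space Yset)"
    unfolding mu_def by (rule emeasure_density) auto
  also have "\<dots> = (\<integral>\<^sup>+y. ennreal (Wof w y) \<partial>count_space Yset)"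
    by (intro nn_integral_cong) auto
  also have "\<dots> = (\<integral>\<^sup>+y. ennreal (Wof w y) \<partial>distr (count_space UNIV) (count_space Yset) gY)"
    using count_Y_distr by simp
  also have "\<dots> = (\<integral>\<^sup>+n. ennreal (Wof w (gY n)) \<partial>count_space UNIV)"
    by (rule nn_integral_distr) (auto simp: gY_in)
  also have "\<dots> = (\<Sum>n. ennreal (w n))" by (simp add: nn_integral_count_space_nat)
  also have "\<dots> = ennreal (suminf w)" using w by (intro suminf_ennreal_eq) (auto simp: summable_sums)
  finally have "emeasure (mu w) (space (mu w)) \<noteq> \<infinity>" by simp
  then have "finite_measure (mu w)" by (rule finite_measureI)
  then show ?thesis
    unfolding finite_measures_on_def by (simp add: mu_sets sets_rc[OF countable_Yset])
qed

lemma occ_eq_mu: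
  assumes A: "\<And>x. \<phi> x \<in> Aset" and s: "\<And>n. (\<lambda>t. pmf (Dp \<phi> t) (gY n)) sums w n"
  shows "occ_Y Yset Aset kern (det_stationary \<phi>) (bseq 1) = mu w"
  unfolding occ_Y_density[OF A] mu_def
proof (rule density_cong)
  show "AE y in count_space Yset. Wsum \<phi> y = ennreal (Wof w y)"
    unfolding AE_count_space
  proof
    fix y assume "y \<in> Yset"
    then obtain n where n: "y = gY n" using range_gY by auto
    show "Wsum \<phi> y = ennreal (Wof w y)"
      unfolding n Wof_gY Wsum_def by (rule suminf_ennreal_eq[OF _ s]) simp
  qed
qed auto



definition wpsi :: "nat \<Rightarrow> real" where "wpsi n = (if n = 0 then 1/2 else (1/2)^(n-1))"
definition wN :: "nat \<Rightarrow> nat \<Rightarrow> real" where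
  "wN N n = (if n = 0 then 0 else if n \<le> N then (1/2)^(n-1) else if n = Suc N then 1/2 else 0)"

lemma pmf_notin: "set_pmf M \<subseteq> S \<Longrightarrow> y \<notin> S \<Longrightarrow> pmf M y = 0"
  by (meson pmf_eq_0_set_pmf subsetD)

lemma pmf_psi_b: "1 \<le> n \<Longrightarrow> pmf (Dp psi t) (bseq n) = (if t = n - 1 then (1/2)^(n-1) else 0)"
  using Dpsi[of t] by (auto intro!: pmf_notin)

lemma pmf_psi_1: "pmf (Dp psi t) 1 = (if t = 0 then 0 else (1/2)^(t+1))"
  using Dpsi[of t] by auto

lemma sums_psi: "(\<lambda>t. pmf (Dp psi t) (gY n)) sums wpsi n"
proof (cases "n = 0")
  case True
  have "(\<lambda>t. (1/4::real) * (1/2)^t) sums ((1/4) * (1 / (1 - 1/2)))"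
    by (intro sums_mult geometric_sums) simp
  then have "(\<lambda>t. pmf (Dp psi (Suc t)) 1) sums (1/2 + pmf (Dp psi 0) 1)"
    by (simp add: pmf_psi_1 power_add)
  then have "(\<lambda>t. pmf (Dp psi t) 1) sums (1/2)"
    by (subst (asm) sums_Suc_iff) (simp add: pmf_psi_1)
  then show ?thesis using True by (simp add: wpsi_def)
next
  case False
  then have "(\<lambda>t. pmf (Dp psi t) (gY n)) = (\<lambda>t. if t = n - 1 then (\<lambda>_. (1/2::real)^(n-1)) t else 0)"
    by (auto simp: gY_def pmf_psi_b)
  moreover have "(\<lambda>t. if t = n - 1 then (\<lambda>_. (1/2::real)^(n-1)) t else 0) sums (1/2)^(n-1)"
    using sums_single[of "n-1" "\<lambda>_. (1/2::real)^(n-1)"] by simp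
  ultimately show ?thesis using False by (simp add: wpsi_def)
qed

lemma pmf_psin_b:
  assumes "3 \<le> N" "1 \<le> n"
  shows "pmf (Dp (psin N) t) (bseq n) = (if t \<le> N then (if n = Suc t then (1/2)^t else 0)
     else if n = Suc N then (1/2)^N * (1 - (1/2)^(N-1))^(t-N) else 0)"
proof (cases "t \<le> N")
  case True
  then show ?thesis using DpsinA[of t N] by (auto intro!: pmf_notin)
next
  case False
  then obtain s where t: "t = N + s" by (metis le_add_diff_inverse nle_le)
  then show ?thesis using DpsinB[OF assms(1), of s] False by (auto intro!: pmf_notin)
qed

lemma pmf_psin_1:
  assumes "3 \<le> N"
  shows "pmf (Dp (psin N) t) 1 = 0"
proof (cases "t \<le> N")
  case True
  then show ?thesis using DpsinA[of t N] by (auto intro!: pmf_notin)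
next
  case False
  then obtain s where t: "t = N + s" by (metis le_add_diff_inverse nle_le)
  then show ?thesis using DpsinB[OF assms(1), of s] False by (auto intro!: pmf_notin)
qed

lemma sums_psin:
  assumes N: "3 \<le> N"
  shows "(\<lambda>t. pmf (Dp (psin N) t) (gY n)) sums wN N n"
proof -
  consider "n = 0" | "1 \<le> n" "n \<le> N" | "n = Suc N" | "Suc N < n" by linarith
  then show ?thesis
  proof cases
    case 1
    then show ?thesis using N by (simp add: pmf_psin_1 wN_def)
  next
    case 2
    then have "(\<lambda>t. pmf (Dp (psin N) t) (gY n)) = (\<lambda>t. if t = n - 1 then (\<lambda>_. (1/2::real)^(n-1)) t else 0)"
      using N 2 by (intro ext) (auto simp: gY_def pmf_psin_b)
    moreover have "(\<lambda>t. if t = n - 1 then (\<lambda>_. (1/2::real)^(n-1)) t else 0) sums (1/2)^(n-1)"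
      using sums_single[of "n-1" "\<lambda>_. (1/2::real)^(n-1)"] by simp
    ultimately show ?thesis using 2 by (simp add: wN_def)
  next
    case 3
    let ?r = "(1 - (1/2::real)^(N-1))"
    let ?f = "\<lambda>t. pmf (Dp (psin N) t) (gY n)"
    have f: "?f t = (if N \<le> t then (1/2)^N * ?r^(t-N) else 0)" for t
      using 3 N by (auto simp: gY_def pmf_psin_b)
    have r: "norm ?r < 1"
    proof -
      have "(0::real) < (1/2)^(N-1)" by simp
      moreover have "((1::real)/2)^(N-1) \<le> 1" by (simp add: power_le_one)
      ultimately show ?thesis by simp
    qed
    have "(\<lambda>t. (1/2::real)^N * ?r^t) sums ((1/2)^N * (1 / (1 - ?r)))"
      by (intro sums_mult geometric_sums r)
    moreover have "(1/2::real)^N * (1 / (1 - ?r)) = 1/2"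
    proof -
      obtain m where m: "N = Suc m" using N by (cases N) auto
      show ?thesis by (simp add: m field_simps)
    qed
    ultimately have "(\<lambda>t. ?f (t + N)) sums (1/2)" by (simp add: f)
    then have "?f sums (1/2 + (\<Sum>i<N. ?f i))" by (rule sums_iff_shift[THEN iffD1])
    moreover have "(\<Sum>i<N. ?f i) = 0" by (simp add: f)
    ultimately show ?thesis using 3 by (simp add: wN_def)
  next
    case 4
    then have "(\<lambda>t. pmf (Dp (psin N) t) (gY n)) = (\<lambda>t. 0)"
      using N by (intro ext) (auto simp: gY_def pmf_psin_b)
    then show ?thesis using 4 by (simp add: wN_def)
  qed
qed

lemma psi_A: "psi x \<in> Aset" by (simp add: psi_def Aset_def)
lemma psin_A: "psin N x \<in> Aset" by (simp add: psin_def Aset_def)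

lemma occ_psi: "occ_Y Yset Aset kern (det_stationary psi) (bseq 1) = mu wpsi"
  by (rule occ_eq_mu[OF psi_A sums_psi])

lemma occ_psin: "3 \<le> N \<Longrightarrow> occ_Y Yset Aset kern (det_stationary (psin N)) (bseq 1) = mu (wN N)"
  by (rule occ_eq_mu[OF psin_A sums_psin])

lemma wpsi_nn: "0 \<le> wpsi n" by (simp add: wpsi_def)
lemma wN_nn: "0 \<le> wN N n" by (simp add: wN_def)

lemma wpsi_sum: "summable wpsi"
proof -
  have "summable (\<lambda>n. wpsi (Suc n))" by (simp add: wpsi_def)
  then show ?thesis by (simp add: summable_Suc_iff)
qed

lemma wN_sum: "summable (wN N)"
  by (rule summable_finite[of "{..Suc N}"]) (auto simp: wN_def)



lemma initial_topspace:
  assumes "\<phi>0 \<in> \<Phi>"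
  shows "topspace (initial_topology M \<Phi>) = M"
proof -
  have "M \<in> {{\<mu>\<in>M. \<phi> \<mu> \<in> U} | \<phi> U. \<phi> \<in> \<Phi> \<and> open U}"
    using assms by (intro CollectI exI[of _ \<phi>0] exI[of _ UNIV]) auto
  then show ?thesis unfolding initial_topology_def by auto
qed

lemma initial_open:
  assumes "\<phi> \<in> \<Phi>" "open U"
  shows "openin (initial_topology M \<Phi>) {\<mu>\<in>M. \<phi> \<mu> \<in> U}"
  unfolding initial_topology_def openin_topology_generated_by_iff
  by (rule generate_topology_on.Basis) (use assms in blast)

lemma limitin_initial:
  assumes \<phi>0: "\<phi>0 \<in> \<Phi>" and l: "l \<in> M" and ev: "\<forall>\<^sub>F n in sequentially. x n \<in> M"
    and conv: "\<And>\<phi>. \<phi> \<in> \<Phi> \<Longrightarrow> (\<lambda>n. \<phi> (x n)) \<longlonglongrightarrow> \<phi> l"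
  shows "limitin (initial_topology M \<Phi>) x l sequentially"
  unfolding limitin_def
proof (intro conjI allI impI)
  show "l \<in> topspace (initial_topology M \<Phi>)" using initial_topspace[OF \<phi>0] l by simp
  fix U assume "openin (initial_topology M \<Phi>) U \<and> l \<in> U"
  then have g: "generate_topology_on {{\<mu>\<in>M. \<phi> \<mu> \<in> U} | \<phi> U. \<phi> \<in> \<Phi> \<and> open U} U" and "l \<in> U"
    unfolding initial_topology_def openin_topology_generated_by_iff by auto
  from g \<open>l \<in> U\<close> show "\<forall>\<^sub>F n in sequentially. x n \<in> U"
  proof (induction arbitrary: rule: generate_topology_on.induct)
    case Empty then show ?case by simp
  next
    case (Int a b) then show ?case by (auto intro: eventually_conj eventually_mono)
  next
    case (UN K)
    then obtain k where "k \<in> K" "l \<in> k" by auto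
    with UN have "\<forall>\<^sub>F n in sequentially. x n \<in> k" by auto
    then show ?case using \<open>k \<in> K\<close> by (auto elim: eventually_mono)
  next
    case (Basis s)
    then obtain \<phi> V where s: "s = {\<mu>\<in>M. \<phi> \<mu> \<in> V}" "\<phi> \<in> \<Phi>" "open V" by auto
    then have "\<phi> l \<in> V" using Basis by auto
    then have "\<forall>\<^sub>F n in sequentially. \<phi> (x n) \<in> V"
      using topological_tendstoD[OF conv[OF s(2)] s(3)] by blast
    then show ?case using ev unfolding s by (auto elim: eventually_mono intro: eventually_conj)
  qed
qed

lemma int_mu_psi:
  fixes f :: "real \<Rightarrow> real"
  assumes f: "\<And>y. y \<in> Yset \<Longrightarrow> \<bar>f y\<bar> \<le> M"
  shows "integral\<^sup>L (mu wpsi) f = f 1 / 2 + (\<Sum>k. (1/2)^k * f (bseq (Suc k)))"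
proof -
  have mi: "summable (\<lambda>n. wpsi n * f (gY n))" "integral\<^sup>L (mu wpsi) f = (\<Sum>n. wpsi n * f (gY n))"
    using mu_integral[where w=wpsi and f=f and M=M] wpsi_nn wpsi_sum f by blast+
  have "(\<Sum>k. wpsi (Suc k) * f (gY (Suc k))) = (\<Sum>n. wpsi n * f (gY n)) - wpsi 0 * f (gY 0)"
    by (rule suminf_split_head[OF mi(1)])
  moreover have e1: "wpsi (Suc k) * f (gY (Suc k)) = (1/2)^k * f (bseq (Suc k))" for k by (simp add: wpsi_def)
  moreover have e0: "wpsi 0 * f (gY 0) = f 1 / 2" by (simp add: wpsi_def)
  ultimately have h: "(\<Sum>k. (1/2)^k * f (bseq (Suc k))) = (\<Sum>n. wpsi n * f (gY n)) - f 1 / 2" by (simp only: e1 e0)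
  show ?thesis using mi(2) h by linarith
qed

lemma int_mu_psin:
  fixes f :: "real \<Rightarrow> real"
  assumes f: "\<And>y. y \<in> Yset \<Longrightarrow> \<bar>f y\<bar> \<le> M"
  shows "integral\<^sup>L (mu (wN N)) f = (\<Sum>k<N. (1/2)^k * f (bseq (Suc k))) + f (bseq (Suc N)) / 2"
proof -
  have mi: "summable (\<lambda>n. wN N n * f (gY n))" "integral\<^sup>L (mu (wN N)) f = (\<Sum>n. wN N n * f (gY n))"
  proof -
    have A: "\<And>n. 0 \<le> wN N n" by (rule wN_nn)
    have B: "summable (wN N)" by (rule wN_sum)
    show "summable (\<lambda>n. wN N n * f (gY n))" "integral\<^sup>L (mu (wN N)) f = (\<Sum>n. wN N n * f (gY n))"
      using mu_integral[where w="wN N" and f=f and M=M] A B f by blast+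
  qed
  have "(\<lambda>k. wN N (Suc k) * f (gY (Suc k))) sums (\<Sum>k\<in>{..<Suc N}. wN N (Suc k) * f (gY (Suc k)))"
    by (rule sums_finite) (auto simp: wN_def)
  also have "(\<Sum>k\<in>{..<Suc N}. wN N (Suc k) * f (gY (Suc k))) = (\<Sum>k<N. (1/2)^k * f (bseq (Suc k))) + f (bseq (Suc N)) / 2"
    by (simp add: wN_def)
  finally have "(\<lambda>n. wN N n * f (gY n)) sums ((\<Sum>k<N. (1/2)^k * f (bseq (Suc k))) + f (bseq (Suc N)) / 2 + wN N 0 * f (gY 0))"
    by (subst (asm) sums_Suc_iff)
  moreover have e0: "wN N 0 * f (gY 0) = 0" by (simp add: wN_def)
  ultimately have "(\<lambda>n. wN N n * f (gY n)) sums ((\<Sum>k<N. (1/2)^k * f (bseq (Suc k))) + f (bseq (Suc N)) / 2)" by (simp only: e0 add_0_right)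
  then show ?thesis unfolding mi(2) by (rule sums_unique[symmetric])
qed



lemma condS: "condition_S Xset Aset kern"
  unfolding condition_S_def
  by (auto simp: Aset_def intro: finite_imp_compact)

lemma bseq_lim: "(\<lambda>n. bseq (Suc n)) \<longlonglongrightarrow> 1"
proof -
  have "(\<lambda>n. (1/2::real)^(Suc n)) \<longlonglongrightarrow> 0"
    by (rule LIMSEQ_Suc[OF LIMSEQ_power_zero]) simp
  then have "(\<lambda>n. 1 - (1/2::real)^(Suc n)) \<longlonglongrightarrow> 1 - 0" by (intro tendsto_diff) auto
  then show ?thesis by (simp add: bseq_eq)
qed

lemma conv_w:
  fixes f :: "real \<Rightarrow> real"
  assumes c: "continuous_on Yset f" and b: "bounded (f ` Yset)"
  shows "(\<lambda>n. integral\<^sup>L (mu (wN n)) f) \<longlonglongrightarrow> integral\<^sup>L (mu wpsi) f"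
proof -
  obtain M where M: "\<And>y. y \<in> Yset \<Longrightarrow> \<bar>f y\<bar> \<le> M" using b unfolding bounded_iff by auto
  let ?a = "\<lambda>k. (1/2::real)^k * f (bseq (Suc k))"
  have sa: "summable ?a"
  proof (rule summable_comparison_test)
    have "bseq (Suc k) \<in> Yset" for k by (auto simp: Yset_def)
    then show "\<exists>N. \<forall>n\<ge>N. norm (?a n) \<le> (1/2)^n * M"
      using M by (auto simp: abs_mult intro!: mult_left_mono)
    show "summable (\<lambda>n. (1/2::real)^n * M)" by (intro summable_mult2) simp
  qed
  have l1: "(\<lambda>n. \<Sum>k<n. ?a k) \<longlonglongrightarrow> suminf ?a" by (rule summable_LIMSEQ[OF sa])
  have l2: "(\<lambda>n. f (bseq (Suc n))) \<longlonglongrightarrow> f 1"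
    by (rule continuous_on_tendsto_compose[OF c bseq_lim]) (auto simp: Yset_def)
  have "(\<lambda>n. (\<Sum>k<n. ?a k) + f (bseq (Suc n)) / 2) \<longlonglongrightarrow> suminf ?a + f 1 / 2"
    by (intro tendsto_add l1 tendsto_divide l2) auto
  then show ?thesis
    using int_mu_psin[of f M, OF M] int_mu_psi[of f M, OF M] by (simp add: add.commute)
qed

lemma mu_psi_fm: "mu wpsi \<in> finite_measures_on Yset" by (rule mu_fm[OF wpsi_nn wpsi_sum])
lemma mu_N_fm: "mu (wN N) \<in> finite_measures_on Yset" by (rule mu_fm[OF wN_nn wN_sum])

lemma zero_in_w: "(\<lambda>\<mu>. \<integral>x. (\<lambda>_. 0::real) x \<partial>\<mu>) \<in> {(\<lambda>\<mu>. \<integral>x. f x \<partial>\<mu>) | f. continuous_on Yset f \<and> bounded (f ` Yset)}"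
proof -
  have "(\<lambda>_. 0::real) ` Yset \<subseteq> {0}" by auto
  then have "bounded ((\<lambda>_. 0::real) ` Yset)" by (meson bounded_subset finite_imp_bounded finite.intros)
  then show ?thesis by (intro CollectI exI[of _ "\<lambda>_. 0::real"]) auto
qed

lemma w_limit_gen:
  assumes ev: "\<forall>\<^sub>F n in sequentially. x n = mu (wN (g n))" and g: "filterlim g sequentially sequentially"
  shows "limitin (w_topology Yset) x (mu wpsi) sequentially"
  unfolding w_topology_def
proof (rule limitin_initial[OF zero_in_w mu_psi_fm])
  show "\<forall>\<^sub>F n in sequentially. x n \<in> finite_measures_on Yset"
    using ev by eventually_elim (simp add: mu_N_fm)
  fix \<phi> :: "real measure \<Rightarrow> real" assume "\<phi> \<in> {(\<lambda>\<mu>. \<integral>x. f x \<partial>\<mu>) | f. continuous_on Yset f \<and> bounded (f ` Yset)}"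
  then obtain f where \<phi>: "\<phi> = (\<lambda>\<mu>. \<integral>x. f x \<partial>\<mu>)" and c: "continuous_on Yset f" and b: "bounded (f ` Yset)" by auto
  have "(\<lambda>n. integral\<^sup>L (mu (wN (g n))) f) \<longlonglongrightarrow> integral\<^sup>L (mu wpsi) f"
    using filterlim_compose[OF conv_w[OF c b] g] by (simp add: o_def)
  moreover have "\<forall>\<^sub>F n in sequentially. integral\<^sup>L (x n) f = integral\<^sup>L (mu (wN (g n))) f"
    using ev by eventually_elim simp
  ultimately show "(\<lambda>n. \<phi> (x n)) \<longlonglongrightarrow> \<phi> (mu wpsi)"
    unfolding \<phi> using tendsto_cong by fastforce
qed

lemma w_limit: "limitin (w_topology Yset) (\<lambda>n. occ_Y Yset Aset kern (det_stationary (psin n)) (bseq 1))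
          (occ_Y Yset Aset kern (det_stationary psi) (bseq 1)) sequentially"
  unfolding occ_psi
proof (rule w_limit_gen[where g = "\<lambda>n. n"])
  show "\<forall>\<^sub>F n in sequentially. occ_Y Yset Aset kern (det_stationary (psin n)) (bseq 1) = mu (wN n)"
    using eventually_ge_at_top[of 3] by eventually_elim (rule occ_psin)
qed (simp add: filterlim_ident)

lemma Lam_set: "{occ_Y Yset Aset kern \<pi> (bseq 1) | \<pi>. \<pi> \<in> Lam} = insert (mu wpsi) (range (\<lambda>n. mu (wN (n + 3))))"
proof -
  have "{occ_Y Yset Aset kern \<pi> (bseq 1) | \<pi>. \<pi> \<in> Lam} =
     insert (occ_Y Yset Aset kern (det_stationary psi) (bseq 1)) {occ_Y Yset Aset kern (det_stationary (psin n)) (bseq 1) | n. 3 \<le> n}"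
    unfolding Lam_def by blast
  also have "{occ_Y Yset Aset kern (det_stationary (psin n)) (bseq 1) | n. 3 \<le> n} = range (\<lambda>n. mu (wN (n + 3)))"
  proof safe
    fix n :: nat assume "3 \<le> n"
    then show "occ_Y Yset Aset kern (det_stationary (psin n)) (bseq 1) \<in> range (\<lambda>n. mu (wN (n + 3)))"
      using occ_psin[of n] by (intro image_eqI[of _ _ "n - 3"]) auto
  next
    fix n :: nat
    show "\<exists>m. mu (wN (n + 3)) = occ_Y Yset Aset kern (det_stationary (psin m)) (bseq 1) \<and> 3 \<le> m"
      using occ_psin[of "n+3"] by (intro exI[of _ "n + 3"]) simp
  qed
  finally show ?thesis by (simp only: occ_psi)
qed

lemma w_compact: "compactin (w_topology Yset) {occ_Y Yset Aset kern \<pi> (bseq 1) | \<pi>. \<pi> \<in> Lam}"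
  unfolding Lam_set
proof (rule compactin_sequence_with_limit)
  show "limitin (w_topology Yset) (\<lambda>n. mu (wN (n + 3))) (mu wpsi) sequentially"
    by (rule w_limit_gen[where g = "\<lambda>n. n + 3"]) (auto intro: filterlim_add_const_nat_at_top)
  show "range (\<lambda>n. mu (wN (n + 3))) \<subseteq> topspace (w_topology Yset)"
    unfolding w_topology_def initial_topspace[OF zero_in_w] by (auto simp: mu_N_fm)
qed auto



lemma int_ind:
  assumes w: "\<And>n. 0 \<le> w n" "summable w"
  shows "integral\<^sup>L (mu w) (indicator {gY j} :: real \<Rightarrow> real) = w j"
proof -
  have b: "\<And>y. y \<in> Yset \<Longrightarrow> \<bar>(indicator {gY j} y :: real)\<bar> \<le> 1" by (simp split: split_indicator)
  have e: "integral\<^sup>L (mu w) (indicator {gY j} :: real \<Rightarrow> real) = (\<Sum>n. w n * indicator {gY j} (gY n))"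
    using mu_integral[where w=w and f="indicator {gY j} :: real \<Rightarrow> real" and M=1] w b by blast
  have "(\<lambda>n. w n * indicator {gY j} (gY n) :: real) = (\<lambda>n. if n = j then w n else 0)"
    using inj_gY by (auto simp: fun_eq_iff inj_eq split: split_indicator)
  moreover have "(\<lambda>n. if n = j then w n else 0) sums w j" by (rule sums_single)
  ultimately show ?thesis unfolding e by (simp add: sums_iff del: integral_indicator)
qed

lemma ind_in_s: "(\<lambda>\<mu>. \<integral>x. (indicator {a} :: real \<Rightarrow> real) x \<partial>\<mu>) \<in>
   {(\<lambda>\<mu>. \<integral>x. f x \<partial>\<mu>) | f. f \<in> borel_measurable (restrict_space borel Yset) \<and> bounded (f ` Yset)}"
proof -
  have s: "sets (restrict_space borel Yset) = sets (count_space Yset)" by (simp add: sets_rc[OF countable_Yset])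
  have m: "(indicator {a} :: real \<Rightarrow> real) \<in> borel_measurable (restrict_space borel Yset)"
    unfolding measurable_cong_sets[OF s refl] by simp
  have "(indicator {a} :: real \<Rightarrow> real) ` Yset \<subseteq> {0, 1}" by (auto simp: indicator_def)
  then have "bounded ((indicator {a} :: real \<Rightarrow> real) ` Yset)"
    by (meson bounded_subset finite_imp_bounded finite.intros)
  with m show ?thesis by blast
qed

definition Uj :: "nat \<Rightarrow> real measure set" where
  "Uj j = {\<mu> \<in> finite_measures_on Yset. (\<lambda>\<mu>. \<integral>x. (indicator {gY j} :: real \<Rightarrow> real) x \<partial>\<mu>) \<mu> \<in> {1/4<..}}"

lemma Uj_open: "openin (s_topology Yset) (Uj j)"
  unfolding s_topology_def Uj_def by (rule initial_open[OF ind_in_s]) simp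

lemma psi_Uj: "mu wpsi \<in> Uj j \<longleftrightarrow> wpsi j > 1/4"
proof -
  have e: "integral\<^sup>L (mu wpsi) (indicator {gY j} :: real \<Rightarrow> real) = wpsi j" by (rule int_ind[OF wpsi_nn wpsi_sum])
  show ?thesis by (simp only: Uj_def mem_Collect_eq e greaterThan_iff) (simp add: mu_psi_fm)
qed

lemma N_Uj: "mu (wN N) \<in> Uj j \<longleftrightarrow> wN N j > 1/4"
proof -
  have e: "integral\<^sup>L (mu (wN N)) (indicator {gY j} :: real \<Rightarrow> real) = wN N j" by (rule int_ind[OF wN_nn wN_sum])
  show ?thesis by (simp only: Uj_def mem_Collect_eq e greaterThan_iff) (simp add: mu_N_fm)
qed

lemma half_pow: "3 \<le> m \<Longrightarrow> (1/2::real)^m \<le> 1/8"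
proof -
  assume "3 \<le> m"
  then have "(1/2::real)^m \<le> (1/2)^3" by (intro power_decreasing) auto
  also have "(1/2::real)^3 = 1/8" by (simp add: power_divide)
  finally show ?thesis .
qed

lemma wN_Suc_gt: "3 \<le> m \<Longrightarrow> wN N (Suc m) > 1/4 \<longleftrightarrow> N = m"
  using half_pow[of m] by (auto simp: wN_def)

lemma s_not_limit: "\<not> limitin (s_topology Yset) (\<lambda>n. occ_Y Yset Aset kern (det_stationary (psin n)) (bseq 1))
          (occ_Y Yset Aset kern (det_stationary psi) (bseq 1)) sequentially"
proof
  assume "limitin (s_topology Yset) (\<lambda>n. occ_Y Yset Aset kern (det_stationary (psin n)) (bseq 1))
          (occ_Y Yset Aset kern (det_stationary psi) (bseq 1)) sequentially"
  moreover have "occ_Y Yset Aset kern (det_stationary psi) (bseq 1) \<in> Uj 0"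
    unfolding occ_psi psi_Uj by (simp add: wpsi_def)
  ultimately have "\<forall>\<^sub>F n in sequentially. occ_Y Yset Aset kern (det_stationary (psin n)) (bseq 1) \<in> Uj 0"
    using Uj_open unfolding limitin_def by blast
  then have "\<forall>\<^sub>F n in sequentially. False"
    using eventually_ge_at_top[of 3]
  proof eventually_elim
    case (elim n)
    then have "mu (wN n) \<in> Uj 0" using occ_psin[of n] by simp
    then show False by (simp add: N_Uj wN_def)
  qed
  then show False by simp
qed

lemma s_not_compact: "\<not> compactin (s_topology Yset) {occ_Y Yset Aset kern \<pi> (bseq 1) | \<pi>. \<pi> \<in> Lam}"
  unfolding Lam_set
proof
  let ?D = "insert (mu wpsi) (range (\<lambda>n. mu (wN (n + 3))))"
  let ?J = "insert 0 (Suc ` {3..})"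
  assume c: "compactin (s_topology Yset) ?D"
  have "?D \<subseteq> \<Union> (Uj ` ?J)"
  proof
    fix \<mu> assume "\<mu> \<in> ?D"
    then consider "\<mu> = mu wpsi" | n where "\<mu> = mu (wN (n + 3))" by auto
    then show "\<mu> \<in> \<Union> (Uj ` ?J)"
    proof cases
      case 1 then show ?thesis by (intro UN_I[of 0]) (auto simp: psi_Uj wpsi_def)
    next
      case 2 then show ?thesis by (intro UN_I[of "Suc (n+3)"]) (auto simp: N_Uj wN_def)
    qed
  qed
  moreover have "\<forall>U\<in>Uj ` ?J. openin (s_topology Yset) U" using Uj_open by auto
  ultimately obtain F where F: "finite F" "F \<subseteq> Uj ` ?J" "?D \<subseteq> \<Union>F"
    using c unfolding compactin_def by meson
  have fin: "finite (U \<inter> ?D)" if "U \<in> F" for U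
  proof -
    have "U \<in> Uj ` ?J" using F(2) that by (rule subsetD)
    then obtain j where j2: "U = Uj j" and j1: "j \<in> ?J" by (rule imageE)
    note j = j1 j2
    show ?thesis
    proof (cases "j = 0")
      case True
      then have "U = Uj 0" using j by simp
      have "U \<inter> ?D \<subseteq> {mu wpsi}"
      proof
        fix \<mu> assume "\<mu> \<in> U \<inter> ?D"
        then have u: "\<mu> \<in> Uj 0" and d: "\<mu> \<in> ?D" using \<open>U = Uj 0\<close> by auto
        from d consider "\<mu> = mu wpsi" | n where "\<mu> = mu (wN (n + 3))" by blast
        then show "\<mu> \<in> {mu wpsi}"
        proof cases
          case 2
          then have "wN (n + 3) 0 > 1/4" using u N_Uj by blast
          then show ?thesis by (simp add: wN_def)
        qed simp
      qed
      then show ?thesis by (rule finite_subset) simp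
    next
      case False
      then obtain m where m: "3 \<le> m" "j = Suc m" using j by auto
      have "U \<inter> ?D \<subseteq> {mu (wN m)}"
      proof
        fix \<mu> assume "\<mu> \<in> U \<inter> ?D"
        then have u: "\<mu> \<in> Uj (Suc m)" and d: "\<mu> \<in> ?D" using j m by auto
        from d consider "\<mu> = mu wpsi" | n where "\<mu> = mu (wN (n + 3))" by blast
        then show "\<mu> \<in> {mu (wN m)}"
        proof cases
          case 1
          then have "wpsi (Suc m) > 1/4" using u psi_Uj by blast
          then show ?thesis using half_pow[OF m(1)] by (simp add: wpsi_def)
        next
          case 2
          then have "wN (n + 3) (Suc m) > 1/4" using u N_Uj by blast
          then have "n + 3 = m" using wN_Suc_gt[OF m(1)] by blast
          then show ?thesis using 2 by simp
        qed
      qed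
      then show ?thesis by (rule finite_subset) simp
    qed
  qed
  have "?D \<subseteq> (\<Union>U\<in>F. U \<inter> ?D)" using F(3) by blast
  moreover have "finite (\<Union>U\<in>F. U \<inter> ?D)" using fin F(1) by blast
  ultimately have "finite ?D" by (rule finite_subset)
  moreover have "inj (\<lambda>n. mu (wN (n + 3)))"
  proof (rule injI)
    fix a b assume "mu (wN (a + 3)) = mu (wN (b + 3))"
    moreover have "mu (wN (a + 3)) \<in> Uj (Suc (a + 3))"
      unfolding N_Uj using wN_Suc_gt[of "a + 3" "a + 3"] by simp
    ultimately have "mu (wN (b + 3)) \<in> Uj (Suc (a + 3))" by simp
    then have "wN (b + 3) (Suc (a + 3)) > 1/4" using N_Uj by blast
    then show "a = b" using wN_Suc_gt[of "a + 3" "b + 3"] by simp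
  qed
  then have "infinite (range (\<lambda>n. mu (wN (n + 3))))" by (rule range_inj_infinite)
  ultimately show False by simp
qed



lemma tau_ge:
  "pmf (Dp \<phi> s) (bseq k) \<le> tau_gt_prob Delta kern (det_stationary \<phi>) (bseq 1) s"
proof -
  let ?H = "hist_dist kern (det_stationary \<phi>) (bseq 1) s"
  have "pmf (Dp \<phi> s) (bseq k) = measure (measure_pmf ?H) (snd -` {bseq k})"
    by (simp add: Dp_def pmf_map)
  also have "\<dots> = measure (measure_pmf ?H) (snd -` {bseq k} \<inter> set_pmf ?H)"
    by (simp add: measure_Int_set_pmf)
  also have "\<dots> \<le> measure (measure_pmf ?H) {h. Delta \<notin> states_of h}"
  proof (rule measure_pmf.finite_measure_mono)
    show "snd -` {bseq k} \<inter> set_pmf ?H \<subseteq> {h. Delta \<notin> states_of h}"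
    proof
      fix h assume h: "h \<in> snd -` {bseq k} \<inter> set_pmf ?H"
      show "h \<in> {h. Delta \<notin> states_of h}"
      proof (rule CollectI, rule notI)
        assume "Delta \<in> states_of h"
        then have "snd h = Delta" using absorbed_inv h by blast
        then show False using h by simp
      qed
    qed
  qed simp
  finally show ?thesis by (simp add: tau_gt_prob_def)
qed

lemma tail_ge:
  assumes N: "3 \<le> N" and n: "n \<le> N"
  shows "ennreal (1/2) \<le> tail_tau Delta kern (det_stationary (psin N)) (bseq 1) n"
proof -
  let ?q = "\<lambda>s. pmf (Dp (psin N) s) (gY (Suc N))"
  have qs: "?q sums (1/2)" using sums_psin[OF N, of "Suc N"] by (simp add: wN_def)
  have "(\<Sum>i<n. ?q i) = 0"
  proof (rule sum.neutral, rule ballI)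
    fix i assume "i \<in> {..<n}"
    then have "i < n" by simp
    then show "?q i = 0" using pmf_psin_b[OF N, of "Suc N" i] n by (simp only: gY_Suc) simp
  qed
  then have "?q sums (1/2 + (\<Sum>i<n. ?q i))" using qs by simp
  then have "(\<lambda>t. ?q (t + n)) sums (1/2)" by (rule sums_iff_shift[THEN iffD2])
  then have e: "(\<Sum>t. ennreal (?q (t + n))) = ennreal (1/2)" by (rule suminf_ennreal_eq[rotated]) simp
  have le: "(\<Sum>t. ennreal (?q (t + n))) \<le> (\<Sum>t. ennreal (tau_gt_prob Delta kern (det_stationary (psin N)) (bseq 1) (t + n)))"
  proof (intro suminf_le ennreal_leI)
    fix t
    show "?q (t + n) \<le> tau_gt_prob Delta kern (det_stationary (psin N)) (bseq 1) (t + n)"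
      using tau_ge[of "psin N" "t + n" "Suc N"] by (simp only: gY_Suc)
  qed (rule summableI)+
  from le show ?thesis unfolding tail_tau_def e .
qed

lemma not_unif: "\<not> uniformly_absorbing Delta kern Aset Lam (bseq 1)"
proof
  assume "uniformly_absorbing Delta kern Aset Lam (bseq 1)"
  then have lim: "(\<lambda>n. \<Squnion>\<pi>\<in>Lam. tail_tau Delta kern \<pi> (bseq 1) n) \<longlonglongrightarrow> 0"
    by (simp add: uniformly_absorbing_def)
  have ge: "ennreal (1/2) \<le> (\<Squnion>\<pi>\<in>Lam. tail_tau Delta kern \<pi> (bseq 1) n)" for n
  proof -
    have "det_stationary (psin (n + 3)) \<in> Lam" unfolding Lam_def by auto
    then have "tail_tau Delta kern (det_stationary (psin (n + 3))) (bseq 1) n \<le> (\<Squnion>\<pi>\<in>Lam. tail_tau Delta kern \<pi> (bseq 1) n)"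
      by (rule SUP_upper)
    moreover have "ennreal (1/2) \<le> tail_tau Delta kern (det_stationary (psin (n + 3))) (bseq 1) n"
      by (rule tail_ge) auto
    ultimately show ?thesis by (rule order.trans[rotated])
  qed
  have "\<forall>\<^sub>F n in sequentially. (\<Squnion>\<pi>\<in>Lam. tail_tau Delta kern \<pi> (bseq 1) n) < ennreal (1/2)"
  proof (rule order_tendstoD(2)[OF lim])
    show "(0::ennreal) < ennreal (1/2)" by (simp only: ennreal_less_zero_iff)
  qed
  then have "\<forall>\<^sub>F n in sequentially. False"
    by eventually_elim (use ge in \<open>simp add: not_less[symmetric]\<close>)
  then show False by simp
qed

theorem proposition3:
  shows "condition_S Xset Aset kern
    \<and> (absorbing Delta kern Aset (bseq 1) \<and> \<not> uniformly_absorbing Delta kern Aset Lam (bseq 1))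
    \<and> (limitin (w_topology Yset) (\<lambda>n. occ_Y Yset Aset kern (det_stationary (psin n)) (bseq 1))
          (occ_Y Yset Aset kern (det_stationary psi) (bseq 1)) sequentially
       \<and> \<not> limitin (s_topology Yset) (\<lambda>n. occ_Y Yset Aset kern (det_stationary (psin n)) (bseq 1))
          (occ_Y Yset Aset kern (det_stationary psi) (bseq 1)) sequentially)
    \<and> (compactin (w_topology Yset) {occ_Y Yset Aset kern \<pi> (bseq 1) | \<pi>. \<pi> \<in> Lam}
       \<and> \<not> compactin (s_topology Yset) {occ_Y Yset Aset kern \<pi> (bseq 1) | \<pi>. \<pi> \<in> Lam})"
  by (intro conjI condS absorbing_thm not_unif w_limit s_not_limit w_compact s_not_compact)

end
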